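(* Let $k\geq1$ and consider real $2k\times2k$ matrices $K,P,A$ where $K$ is an invertible skew-symmetric matrix, $P$ is an orthogonal matrix, $A=\mathrm{diag}(-\alpha_1^2,\dots,-\alpha_{2k}^2)$ with all $\alpha_i\neq0$, and let $\alpha=\pm\sqrt{\alpha_1^2+\dots+\alpha_{2k}^2}$. Suppose $K^2=P^{-1}AP+A\quad\text{and}\quad \alpha K=AP-P^{-1}A.$ Then $k=1$, and there exist $\epsilon,\eta\in\{1,-1\}$ such that $A=\begin{pmatrix}-\alpha_1^2&0\\0&-\alpha_2^2\end{pmatrix},\quad K=\begin{pmatrix}0&\epsilon\sqrt{\alpha_1^2+\alpha_2^2}\\-\epsilon\sqrt{\alpha_1^2+\alpha_2^2}&0\end{pmatrix},\quad P=\begin{pmatrix}0&-\eta\epsilon\\\eta\epsilon&0\end{pmatrix}.$ *)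

theory Defs
  imports Complex_Main "Jordan_Normal_Form.Matrix"
begin

definition skew_symmetric_mat :: "real mat \<Rightarrow> bool" where
  "skew_symmetric_mat K \<longleftrightarrow> transpose_mat K = - K"

definition orthogonal_real_mat :: "real mat \<Rightarrow> bool" where
  "orthogonal_real_mat P \<longleftrightarrow> square_mat P \<and> transpose_mat P * P = 1\<^sub>m (dim_row P)"

definition diag_real_mat :: "nat \<Rightarrow> (nat \<Rightarrow> real) \<Rightarrow> real mat" where
  "diag_real_mat n d = mat n n (\<lambda>(i,j). if i = j then d i else 0)"

end

theory Submission
  imports Defs
begin


lemma k1_alg:
  fixes a b c e d0 d1 :: real
  assumes d0: "d0 > 0" and d1: "d1 > 0"
    and r0: "a^2+b^2=1" and r1: "c^2+e^2=1" and c0: "a^2+c^2=1" and c1: "b^2+e^2=1"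
    and E0: "(d1*c - d0*b)^2 = (d0+d1)*(d0*a^2 + d1*c^2 + d0)"
  shows "a = 0 \<and> e = 0 \<and> c = -b \<and> b^2 = 1"
proof -
  have cb: "c^2 = b^2" using r0 c0 by linarith
  have ea: "e^2 = a^2" using r0 c1 by linarith
  have t: "\<bar>d1*c - d0*b\<bar> \<le> \<bar>d1*c\<bar> + \<bar>d0*b\<bar>" by (rule abs_triangle_ineq4)
  have acb: "\<bar>c\<bar> = \<bar>b\<bar>"
  proof -
    have "sqrt (c^2) = sqrt (b^2)" using cb by simp
    thus ?thesis by simp
  qed
  have t2: "\<bar>d1*c - d0*b\<bar> \<le> (d0+d1)*\<bar>b\<bar>"
    using t acb d0 d1 by (simp add: abs_mult distrib_right)
  have "(d1*c - d0*b)^2 = \<bar>d1*c - d0*b\<bar>^2" by simp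
  also have "\<dots> \<le> ((d0+d1)*\<bar>b\<bar>)^2" by (rule power_mono[OF t2 abs_ge_zero])
  also have "\<dots> = (d0+d1)*((d0+d1)*b^2)" by (simp add: power_mult_distrib power2_eq_square)
  finally have le: "(d0+d1)*(d0*a^2 + d1*c^2 + d0) \<le> (d0+d1)*((d0+d1)*b^2)" using E0 by simp
  have le2: "d0*a^2 + d1*c^2 + d0 \<le> (d0+d1)*b^2"
    using le d0 d1 by simp
  have bb: "b^2 = 1 - a^2" using r0 by simp
  have cc: "c^2 = 1 - a^2" using c0 by simp
  from le2 have "d0*a^2 + d1*(1-a^2) + d0 \<le> (d0+d1)*(1-a^2)" unfolding bb cc .
  hence "d0*a^2 \<le> 0" by (simp add: algebra_simps)
  hence "a^2 \<le> 0" using d0 by (simp add: mult_le_0_iff)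
  hence a0: "a = 0" by simp
  hence e0: "e = 0" using ea by simp
  have b1: "b^2 = 1" using r0 a0 by simp
  have "c = b \<or> c = -b" using acb by arith
  moreover have "c \<noteq> b"
  proof
    assume cb': "c = b"
    have "(d1*c - d0*b)^2 = (d1 - d0)^2 * b^2" unfolding cb' by (simp add: power_mult_distrib flip: left_diff_distrib)
    hence "(d1 - d0)^2 = (d0+d1)*(d1 + d0)" using E0 a0 b1 cb' by simp
    hence "d0*d1 = 0" by (simp add: power2_eq_square algebra_simps)
    thus False using d0 d1 by simp
  qed
  ultimately show ?thesis using a0 e0 b1 by blast
qed

lemma mult_entry:
  assumes "X \<in> carrier_mat n n" "Y \<in> carrier_mat n n" "i < n" "j < n"
  shows "(X * Y) $$ (i,j) = (\<Sum>l<n. X $$ (i,l) * Y $$ (l,j))"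
  using assms by (simp add: scalar_prod_def lessThan_atLeast0)

lemma mat2_eq:
  fixes M :: "real mat"
  assumes "M \<in> carrier_mat 2 2" "M$$(0,0) = x" "M$$(0,1) = y" "M$$(1,0) = z" "M$$(1,1) = w"
  shows "M = mat_of_rows_list 2 [[x,y],[z,w]]"
  apply (rule eq_matI)
  using assms by (auto simp: mat_of_rows_list_def numeral_2_eq_2 less_Suc_eq)

theorem lemma4p3:
  fixes k :: nat and K P Pinv A :: "real mat" and al :: "nat \<Rightarrow> real" and \<alpha> :: real
  assumes "k \<ge> 1"
    and "K \<in> carrier_mat (2*k) (2*k)" and "P \<in> carrier_mat (2*k) (2*k)"
    and "Pinv \<in> carrier_mat (2*k) (2*k)"
    and "skew_symmetric_mat K" and "invertible_mat K"
    and "orthogonal_real_mat P"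
    and "P * Pinv = 1\<^sub>m (2*k)" and "Pinv * P = 1\<^sub>m (2*k)"
    and "\<forall>i<2*k. al i \<noteq> 0"
    and "A = diag_real_mat (2*k) (\<lambda>i. - (al i)\<^sup>2)"
    and "\<alpha> = sqrt (\<Sum>i<2*k. (al i)\<^sup>2) \<or> \<alpha> = - sqrt (\<Sum>i<2*k. (al i)\<^sup>2)"
    and "K * K = Pinv * A * P + A"
    and "\<alpha> \<cdot>\<^sub>m K = A * P - Pinv * A"
  shows "k = 1 \<and> (\<exists>\<epsilon> \<eta> :: real. \<epsilon> \<in> {1, -1} \<and> \<eta> \<in> {1, -1} \<and>
      A = mat_of_rows_list 2 [[- (al 0)\<^sup>2, 0], [0, - (al 1)\<^sup>2]] \<and>
      K = mat_of_rows_list 2 [[0, \<epsilon> * sqrt ((al 0)\<^sup>2 + (al 1)\<^sup>2)],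
                              [- \<epsilon> * sqrt ((al 0)\<^sup>2 + (al 1)\<^sup>2), 0]] \<and>
      P = mat_of_rows_list 2 [[0, - \<eta> * \<epsilon>], [\<eta> * \<epsilon>, 0]])"
proof -
  note as = assms
  define n where "n = 2*k"
  define d where "d = (\<lambda>i. (al i)^2)"
  define s where "s = (\<Sum>i<n. d i)"
  have Kc: "K \<in> carrier_mat n n" and Pc: "P \<in> carrier_mat n n" and Pic: "Pinv \<in> carrier_mat n n"
    using as(2,3,4) n_def by auto
  have Pd: "dim_row P = n" "dim_col P = n" using Pc by auto
  have Ac: "A \<in> carrier_mat n n" using as(11) n_def by (simp add: diag_real_mat_def)
  have dpos: "\<And>i. i < n \<Longrightarrow> d i > 0" using as(10) n_def d_def by auto
  have dnn: "\<And>i. d i \<ge> 0" using d_def by simp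
  have npos: "n > 0" using as(1) n_def by simp
  have spos: "s > 0" unfolding s_def using dpos npos
    by (intro sum_pos) auto
  have dle: "\<And>i. i < n \<Longrightarrow> d i \<le> s" unfolding s_def
    by (rule member_le_sum) (auto simp: dnn)
  have Aent: "\<And>i j. i < n \<Longrightarrow> j < n \<Longrightarrow> A $$ (i,j) = (if i = j then - d i else 0)"
    using as(11) n_def d_def by (simp add: diag_real_mat_def)
  have PtP: "transpose_mat P * P = 1\<^sub>m n"
    using as(7) Pc by (simp add: orthogonal_real_mat_def)
  have Pinv_eq: "Pinv = transpose_mat P"
  proof -
    have "Pinv = (transpose_mat P * P) * Pinv" using PtP Pic by simp
    also have "\<dots> = transpose_mat P * (P * Pinv)"
      using Pc Pic by (simp add: assoc_mult_mat[of _ n n _ n _ n])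
    also have "\<dots> = transpose_mat P" using as(8) n_def Pc by simp
    finally show ?thesis .
  qed
  have PPt: "P * transpose_mat P = 1\<^sub>m n" using as(8) Pinv_eq n_def by simp
  have rown: "\<And>i. i < n \<Longrightarrow> (\<Sum>l<n. (P $$ (i,l))^2) = 1"
  proof -
    fix i assume i: "i < n"
    have "(P * transpose_mat P) $$ (i,i) = 1" using PPt i by simp
    moreover have "(P * transpose_mat P) $$ (i,i) = (\<Sum>l<n. P $$ (i,l) * P $$ (i,l))"
      using mult_entry[of P n "transpose_mat P" i i] Pc i by simp
    ultimately show "(\<Sum>l<n. (P $$ (i,l))^2) = 1" by (simp add: power2_eq_square)
  qed
  have coln: "\<And>i. i < n \<Longrightarrow> (\<Sum>l<n. (P $$ (l,i))^2) = 1"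
  proof -
    fix i assume i: "i < n"
    have "(transpose_mat P * P) $$ (i,i) = 1" using PtP i by simp
    moreover have "(transpose_mat P * P) $$ (i,i) = (\<Sum>l<n. P $$ (l,i) * P $$ (l,i))"
      using mult_entry[of "transpose_mat P" n P i i] Pc i by simp
    ultimately show "(\<Sum>l<n. (P $$ (l,i))^2) = 1" by (simp add: power2_eq_square)
  qed
  have AP: "\<And>i j. i < n \<Longrightarrow> j < n \<Longrightarrow> (A * P) $$ (i,j) = - d i * P $$ (i,j)"
  proof -
    fix i j assume i: "i < n" and j: "j < n"
    have "(A * P) $$ (i,j) = (\<Sum>l<n. A $$ (i,l) * P $$ (l,j))" using mult_entry[OF Ac Pc i j] .
    also have "\<dots> = (\<Sum>l<n. if l = i then - d i * P $$ (i,j) else 0)"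
      by (rule sum.cong) (auto simp: Aent i)
    also have "\<dots> = - d i * P $$ (i,j)" using i by simp
    finally show "(A * P) $$ (i,j) = - d i * P $$ (i,j)" .
  qed
  have PiA: "\<And>i j. i < n \<Longrightarrow> j < n \<Longrightarrow> (Pinv * A) $$ (i,j) = - P $$ (j,i) * d j"
  proof -
    fix i j assume i: "i < n" and j: "j < n"
    have "(Pinv * A) $$ (i,j) = (\<Sum>l<n. Pinv $$ (i,l) * A $$ (l,j))" using mult_entry[OF Pic Ac i j] .
    also have "\<dots> = (\<Sum>l<n. if l = j then - P $$ (j,i) * d j else 0)"
      by (rule sum.cong) (auto simp: Aent j i Pinv_eq Pd)
    also have "\<dots> = - P $$ (j,i) * d j" using j by simp
    finally show "(Pinv * A) $$ (i,j) = - P $$ (j,i) * d j" .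
  qed
  have PiAc: "Pinv * A \<in> carrier_mat n n" using Pic Ac by simp
  have PiAP: "\<And>i. i < n \<Longrightarrow> (Pinv * A * P) $$ (i,i) = - (\<Sum>l<n. d l * (P $$ (l,i))^2)"
  proof -
    fix i assume i: "i < n"
    have "(Pinv * A * P) $$ (i,i) = (\<Sum>l<n. (Pinv * A) $$ (i,l) * P $$ (l,i))"
      using mult_entry[OF PiAc Pc i i] .
    also have "\<dots> = (\<Sum>l<n. - (d l * (P $$ (l,i))^2))"
      by (rule sum.cong) (auto simp: PiA i power2_eq_square)
    finally show "(Pinv * A * P) $$ (i,i) = - (\<Sum>l<n. d l * (P $$ (l,i))^2)"
      by (simp add: sum_negf)
  qed
  have Ment: "\<And>i j. i < n \<Longrightarrow> j < n \<Longrightarrow> \<alpha> * K $$ (i,j) = - d i * P $$ (i,j) + P $$ (j,i) * d j"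
  proof -
    fix i j assume i: "i < n" and j: "j < n"
    have "(\<alpha> \<cdot>\<^sub>m K) $$ (i,j) = \<alpha> * K $$ (i,j)" using Kc i j by simp
    moreover have "(A * P - Pinv * A) $$ (i,j) = (A * P) $$ (i,j) - (Pinv * A) $$ (i,j)"
      using PiAc i j by (subst index_minus_mat) auto
    ultimately show "\<alpha> * K $$ (i,j) = - d i * P $$ (i,j) + P $$ (j,i) * d j"
      using as(14) AP[OF i j] PiA[OF i j] by simp
  qed
  have KKd: "\<And>i. i < n \<Longrightarrow> (K * K) $$ (i,i) = - (\<Sum>l<n. d l * (P $$ (l,i))^2) - d i"
  proof -
    fix i assume i: "i < n"
    have "(Pinv * A * P + A) $$ (i,i) = (Pinv * A * P) $$ (i,i) + A $$ (i,i)"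
      using Ac i by simp
    thus "(K * K) $$ (i,i) = - (\<Sum>l<n. d l * (P $$ (l,i))^2) - d i"
      using as(13) PiAP[OF i] Aent[OF i i] by simp
  qed
  have al2: "\<alpha>^2 = s"
    using as(12) unfolding s_def d_def n_def using spos s_def d_def n_def by auto
  have E: "\<And>i. i < n \<Longrightarrow> (\<Sum>l<n. (d l * P $$ (l,i) - d i * P $$ (i,l))^2)
        = s * ((\<Sum>l<n. d l * (P $$ (l,i))^2) + d i)"
  proof -
    fix i assume i: "i < n"
    have "\<alpha>^2 * (K * K) $$ (i,i) = (\<Sum>l<n. (\<alpha> * K $$ (i,l)) * (\<alpha> * K $$ (l,i)))"
      using mult_entry[OF Kc Kc i i] by (simp add: sum_distrib_left power2_eq_square algebra_simps)
    also have "\<dots> = (\<Sum>l<n. (-1) * (d l * P $$ (l,i) - d i * P $$ (i,l))^2)"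
      by (rule sum.cong) (auto simp: Ment i power2_eq_square algebra_simps)
    also have "\<dots> = - (\<Sum>l<n. (d l * P $$ (l,i) - d i * P $$ (i,l))^2)"
      by (simp add: sum_negf)
    finally show "(\<Sum>l<n. (d l * P $$ (l,i) - d i * P $$ (i,l))^2)
        = s * ((\<Sum>l<n. d l * (P $$ (l,i))^2) + d i)" using KKd[OF i] al2 by (simp add: algebra_simps)
  qed
  define X where "X = (\<lambda>i. (\<Sum>l<n. d l * P$$(l,i) * P$$(i,l)))"
  have ineq: "\<And>i. i < n \<Longrightarrow> s \<le> -2 * X i + d i"
  proof -
    fix i assume i: "i < n"
    have "(\<Sum>l<n. (d l * P $$ (l,i) - d i * P $$ (i,l))^2)
       = (\<Sum>l<n. d l^2 * (P$$(l,i))^2 - 2 * d i * (d l * P$$(l,i) * P$$(i,l)) + d i^2 * (P$$(i,l))^2)"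
      by (rule sum.cong) (auto simp: power2_diff power_mult_distrib algebra_simps)
    also have "\<dots> = (\<Sum>l<n. d l^2 * (P$$(l,i))^2) - 2 * d i * X i + d i^2 * (\<Sum>l<n. (P$$(i,l))^2)"
      by (simp add: X_def sum.distrib sum_subtractf sum_distrib_left)
    also have "\<dots> = (\<Sum>l<n. d l^2 * (P$$(l,i))^2) - 2 * d i * X i + d i^2"
      using rown[OF i] by simp
    finally have e1: "(\<Sum>l<n. d l^2 * (P$$(l,i))^2) - 2 * d i * X i + d i^2
        = s * ((\<Sum>l<n. d l * (P $$ (l,i))^2) + d i)" using E[OF i] by simp
    have bound: "(\<Sum>l<n. d l^2 * (P$$(l,i))^2) \<le> s * (\<Sum>l<n. d l * (P$$(l,i))^2)"
      unfolding sum_distrib_left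
    proof (rule sum_mono)
      fix l assume "l \<in> {..<n}"
      hence "d l \<le> s" using dle by simp
      hence "d l * (d l * (P$$(l,i))^2) \<le> s * (d l * (P$$(l,i))^2)"
        by (rule mult_right_mono) (simp add: dnn)
      thus "d l^2 * (P$$(l,i))^2 \<le> s * (d l * (P$$(l,i))^2)" by (simp add: power2_eq_square algebra_simps)
    qed
    have "s * d i \<le> d i * (-2 * X i + d i)"
      using e1 bound by (simp add: algebra_simps power2_eq_square)
    hence "d i * s \<le> d i * (-2 * X i + d i)" by (simp add: mult.commute)
    thus "s \<le> -2 * X i + d i" using dpos[OF i] by simp
  qed
  have sum1: "(\<Sum>i<n. s) \<le> (\<Sum>i<n. -2 * X i + d i)"
    by (rule sum_mono) (use ineq in auto)
  have "(\<Sum>i<n. -2 * X i + d i) = -2 * (\<Sum>i<n. X i) + s"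
    by (simp add: sum.distrib sum_distrib_left s_def sum_subtractf sum_negf)
  hence sum1': "real n * s \<le> -2 * (\<Sum>i<n. X i) + s" using sum1 by simp
  have sum2: "-2 * (\<Sum>i<n. X i) \<le> (\<Sum>i<n. \<Sum>l<n. d l * ((P$$(l,i))^2 + (P$$(i,l))^2))"
    unfolding X_def sum_distrib_left
  proof (rule sum_mono, rule sum_mono)
    fix i l
    have "0 \<le> d l * (P$$(l,i) + P$$(i,l))^2" by (simp add: dnn)
    thus "-2 * (d l * P$$(l,i) * P$$(i,l)) \<le> d l * ((P$$(l,i))^2 + (P$$(i,l))^2)"
      by (simp add: power2_sum algebra_simps)
  qed
  have sum3: "(\<Sum>i<n. \<Sum>l<n. d l * ((P$$(l,i))^2 + (P$$(i,l))^2)) = 2 * s"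
  proof -
    have "(\<Sum>i<n. \<Sum>l<n. d l * ((P$$(l,i))^2 + (P$$(i,l))^2))
        = (\<Sum>l<n. \<Sum>i<n. d l * ((P$$(l,i))^2 + (P$$(i,l))^2))" by (rule sum.swap)
    also have "\<dots> = (\<Sum>l<n. d l * ((\<Sum>i<n. (P$$(l,i))^2) + (\<Sum>i<n. (P$$(i,l))^2)))"
      by (rule sum.cong) (simp_all add: distrib_left sum_distrib_left sum.distrib)
    also have "\<dots> = (\<Sum>l<n. 2 * d l)"
      by (rule sum.cong) (auto simp: rown coln)
    finally show ?thesis by (simp add: s_def sum_distrib_left)
  qed
  have "real n * s \<le> 3 * s" using sum1' sum2 sum3 by linarith
  hence "real n \<le> 3" using spos by simp
  hence k1: "k = 1" using as(1) n_def by simp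
  have n2: "n = 2" using k1 n_def by simp
  define a where "a = P$$(0,0)"
  define b where "b = P$$(0,1)"
  define c where "c = P$$(1,0)"
  define e where "e = P$$(1,1)"
  have s2: "s = d 0 + d 1" using n2 s_def by (simp add: numeral_2_eq_2)
  have r0: "a^2+b^2=1" using rown[of 0] n2 by (simp add: numeral_2_eq_2 a_def b_def)
  have r1: "c^2+e^2=1" using rown[of 1] n2 by (simp add: numeral_2_eq_2 c_def e_def)
  have c0: "a^2+c^2=1" using coln[of 0] n2 by (simp add: numeral_2_eq_2 a_def c_def)
  have c1: "b^2+e^2=1" using coln[of 1] n2 by (simp add: numeral_2_eq_2 b_def e_def)
  have E0: "(d 1*c - d 0*b)^2 = (d 0+d 1)*(d 0*a^2 + d 1*c^2 + d 0)"
    using E[of 0] n2 s2 by (simp add: numeral_2_eq_2 a_def b_def c_def)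
  have d0p: "d 0 > 0" and d1p: "d 1 > 0" using dpos n2 by auto
  from k1_alg[OF d0p d1p r0 r1 c0 c1 E0] have a0: "a = 0" and e0: "e = 0" and cb: "c = -b" and b1: "b^2 = 1"
    by auto
  have bpm: "b = 1 \<or> b = -1" using b1 by (metis power2_eq_1_iff)
  have anz: "\<alpha> \<noteq> 0" using al2 spos by auto
  have Kent: "\<And>i j. i < n \<Longrightarrow> j < n \<Longrightarrow> K $$ (i,j) = (- d i * P $$ (i,j) + P $$ (j,i) * d j) / \<alpha>"
    using Ment anz by (simp add: eq_divide_eq mult.commute)
  have K00: "K $$ (0,0) = 0" using Kent[of 0 0] n2 by simp
  have K11: "K $$ (1,1) = 0" using Kent[of 1 1] n2 by simp
  have K01: "K $$ (0,1) = - b * s / \<alpha>" using Kent[of 0 1] n2 s2 cb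
    by (simp add: b_def c_def algebra_simps)
  have K10: "K $$ (1,0) = b * s / \<alpha>" using Kent[of 1 0] n2 s2 cb
    by (simp add: b_def c_def algebra_simps)
  have Kc2: "K \<in> carrier_mat 2 2" using Kc n2 by simp
  have Pc2: "P \<in> carrier_mat 2 2" using Pc n2 by simp
  have Ac2: "A \<in> carrier_mat 2 2" using Ac n2 by simp
  have Aeq: "A = mat_of_rows_list 2 [[- (al 0)\<^sup>2, 0], [0, - (al 1)\<^sup>2]]"
    by (rule mat2_eq[OF Ac2]) (use Aent n2 d_def in auto)
  have sq: "sqrt ((al 0)\<^sup>2 + (al 1)\<^sup>2) = sqrt s" using s2 d_def by simp
  have ssq: "s / sqrt s = sqrt s" using spos by (simp add: real_div_sqrt)
  have ssq': "b * s / sqrt s = b * sqrt s" using ssq by (metis times_divide_eq_right)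
  have alc: "\<alpha> = sqrt s \<or> \<alpha> = - sqrt s" using as(12) unfolding s_def d_def n_def .
  show ?thesis
  proof (cases "\<alpha> = sqrt s")
    case True
    have "K = mat_of_rows_list 2 [[0, (-b) * sqrt ((al 0)\<^sup>2 + (al 1)\<^sup>2)],
                              [- (-b) * sqrt ((al 0)\<^sup>2 + (al 1)\<^sup>2), 0]]"
      using K00 K11 K01 K10 True sq ssq' by (intro mat2_eq[OF Kc2]) simp_all
    moreover have "P = mat_of_rows_list 2 [[0, - 1 * (-b)], [1 * (-b), 0]]"
      using a0[unfolded a_def] e0[unfolded e_def] b_def cb[unfolded c_def b_def] by (intro mat2_eq[OF Pc2]) simp_all
    ultimately show ?thesis using k1 Aeq bpm by (intro conjI exI[of _ "-b"] exI[of _ 1]) auto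
  next
    case False
    hence aN: "\<alpha> = - sqrt s" using alc by simp
    have "K = mat_of_rows_list 2 [[0, b * sqrt ((al 0)\<^sup>2 + (al 1)\<^sup>2)],
                              [- b * sqrt ((al 0)\<^sup>2 + (al 1)\<^sup>2), 0]]"
      using K00 K11 K01 K10 aN sq ssq' by (intro mat2_eq[OF Kc2]) simp_all
    moreover have "P = mat_of_rows_list 2 [[0, - (-1) * b], [(-1) * b, 0]]"
      using a0[unfolded a_def] e0[unfolded e_def] b_def cb[unfolded c_def b_def] by (intro mat2_eq[OF Pc2]) simp_all
    ultimately show ?thesis using k1 Aeq bpm by (intro conjI exI[of _ "b"] exI[of _ "-1"]) auto
  qed
qed

end
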